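(* Let $k$ be an algebraically closed field and $(B,\varepsilon)$ a finite-dimensional commutative Frobenius algebra over $k$ (the zero algebra allowed). Then its generating function $Z_{(B,\varepsilon)}(T)$ has one of the two forms (1) $Z=\mu+mT+\sum_{i=1}^s\frac{m_i\lambda_i^{-1}}{1-\lambda_iT}$ with $\mu\in k$, $m\in\{2,3,\dots\}$, $s\ge0$, $m_i\in\{1,2,\dots\}$, $\lambda_i\in k^\times$; (2) $Z=\sum_{i=1}^s\frac{m_i\lambda_i^{-1}}{1-\lambda_iT}$ with $s\ge0$, $m_i\in\{1,2,\dots\}$, $\lambda_i\in k^\times$. Conversely, every power series of form (1) or (2), for all values of the parameters, is $Z_{(B,\varepsilon)}$ for some finite-dimensional commutative Frobenius algebra $(B,\varepsilon)$ over $k$.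
   Context: A commutative Frobenius algebra $(B,\varepsilon)$ over $k$ is a finite-dimensional commutative $k$-algebra $B$ with a $k$-linear map $\varepsilon:B\to k$ such that $(x,y)\mapsto\varepsilon(xy)$ is nondegenerate. Its handle element is $h_B=\sum_{i=1}^r u_iv_i$ where $\{u_i\}$ is a basis of $B$ and $\{v_i\}$ the dual basis with $\varepsilon(u_iv_j)=\delta_{ij}$ (independent of the basis). The generating function is $Z_{(B,\varepsilon)}(T)=\sum_{g\ge0}\varepsilon(h_B^g)T^g\in k[[T]]$; $\varepsilon(h_B^g)$ is the value of the closed connected oriented genus-$g$ surface in the 2D TQFT determined by $(B,\varepsilon)$. Rational functions are identified with their power series expansions at $T=0$. *)

theory Defs
  imports "HOL-Computational_Algebra.Polynomial" "HOL-Computational_Algebra.Formal_Power_Series"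
begin

text \<open>
  A finite-dimensional commutative algebra over a field k is encoded by a basis
  e_0,...,e_{r-1} (r = dim B, r = 0 is the zero algebra) and its structure constants:
  e_i * e_j = sum_l c i j l e_l.  Elements of B are coordinate vectors nat => k
  vanishing from index r on.
\<close>

definition vecs :: "nat \<Rightarrow> (nat \<Rightarrow> 'k::field) set" where
  "vecs r = {x. \<forall>i\<ge>r. x i = 0}"

definition bvec :: "nat \<Rightarrow> nat \<Rightarrow> 'k::field" where
  "bvec i = (\<lambda>l. if l = i then 1 else 0)"

definition amult :: "nat \<Rightarrow> (nat \<Rightarrow> nat \<Rightarrow> nat \<Rightarrow> 'k::field)
    \<Rightarrow> (nat \<Rightarrow> 'k) \<Rightarrow> (nat \<Rightarrow> 'k) \<Rightarrow> (nat \<Rightarrow> 'k)" where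
  "amult r c x y = (\<lambda>l. if l < r then (\<Sum>i<r. \<Sum>j<r. x i * y j * c i j l) else 0)"

definition counit :: "nat \<Rightarrow> (nat \<Rightarrow> 'k::field) \<Rightarrow> (nat \<Rightarrow> 'k) \<Rightarrow> 'k" where
  "counit r e x = (\<Sum>i<r. e i * x i)"

definition comm_frobenius ::
  "nat \<Rightarrow> (nat \<Rightarrow> nat \<Rightarrow> nat \<Rightarrow> 'k::field) \<Rightarrow> (nat \<Rightarrow> 'k) \<Rightarrow> (nat \<Rightarrow> 'k) \<Rightarrow> bool" where
  "comm_frobenius r c u e \<longleftrightarrow>
     (\<forall>x\<in>vecs r. \<forall>y\<in>vecs r. amult r c x y = amult r c y x) \<and>
     (\<forall>x\<in>vecs r. \<forall>y\<in>vecs r. \<forall>z\<in>vecs r.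
        amult r c (amult r c x y) z = amult r c x (amult r c y z)) \<and>
     u \<in> vecs r \<and> (\<forall>x\<in>vecs r. amult r c u x = x) \<and>
     (\<forall>x\<in>vecs r. (\<forall>y\<in>vecs r. counit r e (amult r c x y) = 0) \<longrightarrow> x = (\<lambda>_. 0))"

definition is_dual_basis ::
  "nat \<Rightarrow> (nat \<Rightarrow> nat \<Rightarrow> nat \<Rightarrow> 'k::field) \<Rightarrow> (nat \<Rightarrow> 'k) \<Rightarrow> (nat \<Rightarrow> nat \<Rightarrow> 'k) \<Rightarrow> bool" where
  "is_dual_basis r c e v \<longleftrightarrow> (\<forall>j<r. v j \<in> vecs r) \<and>
     (\<forall>i<r. \<forall>j<r. counit r e (amult r c (bvec i) (v j)) = (if i = j then 1 else 0))"

definition handle ::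
  "nat \<Rightarrow> (nat \<Rightarrow> nat \<Rightarrow> nat \<Rightarrow> 'k::field) \<Rightarrow> (nat \<Rightarrow> 'k) \<Rightarrow> nat \<Rightarrow> 'k" where
  "handle r c e = (let v = (SOME v. is_dual_basis r c e v) in
     (\<lambda>l. \<Sum>i<r. amult r c (bvec i) (v i) l))"

definition genfun ::
  "nat \<Rightarrow> (nat \<Rightarrow> nat \<Rightarrow> nat \<Rightarrow> 'k::field) \<Rightarrow> (nat \<Rightarrow> 'k) \<Rightarrow> (nat \<Rightarrow> 'k) \<Rightarrow> 'k fps" where
  "genfun r c u e = Abs_fps (\<lambda>g. counit r e ((amult r c (handle r c e) ^^ g) u))"

definition geom_part :: "nat \<Rightarrow> (nat \<Rightarrow> nat) \<Rightarrow> (nat \<Rightarrow> 'k::field) \<Rightarrow> 'k fps" where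
  "geom_part s ms lams =
     (\<Sum>i<s. fps_const (of_nat (ms i) / lams i) * inverse (1 - fps_const (lams i) * fps_X))"

definition form1 :: "'k::field fps \<Rightarrow> bool" where
  "form1 F \<longleftrightarrow> (\<exists>\<mu> (m::nat) s ms lams. m \<ge> 2 \<and> (\<forall>i<s. ms i \<ge> 1 \<and> lams i \<noteq> 0) \<and>
      F = fps_const \<mu> + fps_const (of_nat m) * fps_X + geom_part s ms lams)"

definition form2 :: "'k::field fps \<Rightarrow> bool" where
  "form2 F \<longleftrightarrow> (\<exists>s ms lams. (\<forall>i<s. ms i \<ge> 1 \<and> lams i \<noteq> 0) \<and>
      F = geom_part s ms lams)"

end

theory Submission
  imports Defs "Jordan_Normal_Form.Schur_Decomposition" "Jordan_Normal_Form.DL_Rank"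
begin

lemma mult_ent:
  assumes "A \<in> carrier_mat n m" "B \<in> carrier_mat m p" "i < n" "j < p"
  shows "(A*B)$$(i,j) = (\<Sum>k<m. A$$(i,k)*B$$(k,j))"
  using assms by (auto simp: scalar_prod_def intro!: sum.cong)

definition mtr :: "'a::comm_ring_1 mat \<Rightarrow> 'a" where
  "mtr M = (\<Sum>i<dim_row M. M $$ (i,i))"

lemma mtr_comm:
  assumes "X \<in> carrier_mat n n" "Y \<in> carrier_mat n n"
  shows "mtr (X*Y) = mtr (Y*X)"
proof -
  have "mtr (X*Y) = (\<Sum>i<n. \<Sum>k<n. X$$(i,k)*Y$$(k,i))"
    using assms by (simp add: mtr_def mult_ent[OF assms] del: index_mult_mat(1))
  also have "\<dots> = (\<Sum>k<n. \<Sum>i<n. Y$$(k,i)*X$$(i,k))"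
    by (subst sum.swap) (simp add: mult.commute)
  also have "\<dots> = mtr (Y*X)"
    using assms by (simp add: mtr_def mult_ent[OF assms(2,1)] del: index_mult_mat(1))
  finally show ?thesis .
qed

lemma mtr_sim:
  assumes "similar_mat_wit A B P Q" "A \<in> carrier_mat n n"
  shows "mtr A = mtr B"
proof -
  note d = similar_mat_witD2[OF assms(2) assms(1)]
  have "mtr A = mtr (P * (B * Q))" using d by (simp add: assoc_mult_mat[of _ n n _ n _ n])
  also have "\<dots> = mtr ((B * Q) * P)" using d by (intro mtr_comm[of _ n]) auto
  also have "\<dots> = mtr B" using d by (simp add: assoc_mult_mat[of _ n n _ n _ n])
  finally show ?thesis .
qed

lemma utD: "upper_triangular A \<Longrightarrow> A \<in> carrier_mat n m \<Longrightarrow> j < i \<Longrightarrow> i < n \<Longrightarrow> A$$(i,j) = 0"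
  by auto

lemma ut_mult:
  fixes A B :: "'a::field mat"
  assumes "A \<in> carrier_mat n n" "B \<in> carrier_mat n n" "upper_triangular A" "upper_triangular B"
  shows "upper_triangular (A*B)" "\<And>i. i<n \<Longrightarrow> (A*B)$$(i,i) = A$$(i,i)*B$$(i,i)"
proof -
  show "upper_triangular (A*B)"
  proof
    fix i j assume ij: "j < i" "i < dim_row (A*B)"
    hence "i < n" using assms by simp
    have "(A*B)$$(i,j) = (\<Sum>k<n. A$$(i,k)*B$$(k,j))" using ij \<open>i<n\<close> by (intro mult_ent[OF assms(1,2)]) auto
    also have "\<dots> = 0"
    proof (rule sum.neutral, intro ballI)
      fix k assume "k \<in> {..<n}"
      show "A$$(i,k)*B$$(k,j) = 0"
      proof (cases "k < i")
        case True thus ?thesis using assms(1) \<open>i<n\<close> upper_triangularD[OF assms(3) True] by auto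
      next
        case False hence "j < k" using ij by simp
        thus ?thesis using utD[OF assms(4,2) \<open>j<k\<close>] \<open>k \<in> {..<n}\<close> by auto
      qed
    qed
    finally show "(A*B)$$(i,j) = 0" .
  qed
  fix i assume i: "i < n"
  have "(A*B)$$(i,i) = (\<Sum>k<n. A$$(i,k)*B$$(k,i))" using i by (intro mult_ent[OF assms(1,2)]) auto
  also have "\<dots> = (\<Sum>k\<in>{i}. A$$(i,k)*B$$(k,i))"
  proof (rule sum.mono_neutral_right)
    show "\<forall>k\<in>{..<n} - {i}. A$$(i,k)*B$$(k,i) = 0"
    proof
      fix k assume k: "k \<in> {..<n} - {i}"
      show "A$$(i,k)*B$$(k,i) = 0"
      proof (cases "k < i")
        case True thus ?thesis using assms(1) i upper_triangularD[OF assms(3) True] by auto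
      next
        case False hence "i < k" using k by simp
        thus ?thesis using utD[OF assms(4,2) \<open>i<k\<close>] k by auto
      qed
    qed
  qed (use i in auto)
  finally show "(A*B)$$(i,i) = A$$(i,i)*B$$(i,i)" by simp
qed

lemma ut_pow:
  fixes A :: "'a::field mat"
  assumes "A \<in> carrier_mat n n" "upper_triangular A"
  shows "upper_triangular (A ^\<^sub>m k) \<and> (\<forall>i<n. (A ^\<^sub>m k)$$(i,i) = A$$(i,i)^k)"
proof (induct k)
  case 0 thus ?case using assms by auto
next
  case (Suc k)
  have c: "A ^\<^sub>m k \<in> carrier_mat n n" using assms by auto
  show ?case using ut_mult[OF c assms(1) _ assms(2)] Suc by (auto simp: mult.commute)
qed

lemma ut_minus:
  fixes A :: "'a::field mat"
  assumes "A \<in> carrier_mat n n" "upper_triangular A"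
  shows "upper_triangular (A - d \<cdot>\<^sub>m 1\<^sub>m n)" "\<And>i. i<n \<Longrightarrow> (A - d \<cdot>\<^sub>m 1\<^sub>m n)$$(i,i) = A$$(i,i) - d"
  using assms by (auto intro!: upper_triangularI simp: utD[OF assms(2,1)])

lemma inv_ex:
  fixes A :: "'a::field mat"
  assumes A: "A \<in> carrier_mat n n" and d: "det A \<noteq> 0"
  shows "\<exists>B. B \<in> carrier_mat n n \<and> A * B = 1\<^sub>m n \<and> B * A = 1\<^sub>m n"
proof -
  from det_non_zero_imp_unit[OF A d, of "()"]
  obtain Q where "Q \<in> carrier_mat n n" "Q * A = 1\<^sub>m n" "A * Q = 1\<^sub>m n"
    unfolding Units_def ring_mat_def by auto
  thus ?thesis by blast
qed

lemma ev_exists: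
  fixes A :: "'a::alg_closed_field mat"
  assumes A: "A \<in> carrier_mat n n" and n: "n > 0"
  shows "\<exists>e. eigenvalue A e"
proof -
  have "degree (char_poly A) > 0" using degree_monic_char_poly[OF A] n by simp
  from alg_closed_imp_poly_has_root[OF this] obtain x where "poly (char_poly A) x = 0" by blast
  thus ?thesis using eigenvalue_root_char_poly[OF A] by blast
qed

lemma triang_ev:
  fixes A :: "'a::alg_closed_field mat"
  assumes "A \<in> carrier_mat n n" "eigenvalue A e"
  shows "\<exists>B P Q. similar_mat_wit A B P Q \<and> upper_triangular B \<and> B $$ (0,0) = e"
  using assms
proof (induct n arbitrary: A e)
  case 0
  thus ?case using eigenvalue_imp_nonzero_dim by blast
next
  case (Suc n1 A e)
  define n where "n = Suc n1"
  have A: "A \<in> carrier_mat n n" using Suc n_def by simp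
  from Suc(3) obtain v where ev: "eigenvector A v e" unfolding eigenvalue_def by blast
  hence v: "v \<in> carrier_vec n" and v0: "v \<noteq> 0\<^sub>v n" and Av: "A *\<^sub>v v = e \<cdot>\<^sub>v v"
    using A unfolding eigenvector_def by auto
  interpret vec_space "TYPE('a)" n .
  define b where "b = basis_completion v"
  note bc = basis_completion[OF v v0, folded b_def]
  define W where "W = mat_of_cols n b"
  have W: "W \<in> carrier_mat n n" unfolding W_def using bc by auto
  have colsW: "cols W = b" unfolding W_def using bc by auto
  have "rank W = n"
    using lin_indpt_full_rank[OF W] bc colsW by auto
  hence "det W \<noteq> 0" using det_rank_iff[OF W] by simp
  from inv_ex[OF W this] obtain W' where W': "W' \<in> carrier_mat n n"
    and WW': "W * W' = 1\<^sub>m n" and W'W: "W' * W = 1\<^sub>m n" by blast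
  define A' where "A' = W' * A * W"
  have A': "A' \<in> carrier_mat n n" using W W' A unfolding A'_def by auto
  have simAA': "similar_mat_wit A A' W W'"
  proof (rule similar_mat_witI[OF WW' W'W _ A A' W W'])
    have "W * A' * W' = (W * W') * A * (W * W')"
      unfolding A'_def using W W' A by (simp add: assoc_mult_mat[of _ n n _ n _ n])
    thus "A = W * A' * W'" using A WW' by simp
  qed
  have n0: "0 < n" unfolding n_def by simp
  have colW0: "col W 0 = v"
    using bc n0 unfolding W_def by (cases b) (auto simp: col_mat_of_cols)
  have A'0: "A' $$ (i,0) = (if i = 0 then e else 0)" if i: "i < n" for i
  proof -
    have AW: "A * W \<in> carrier_mat n n" using A W by auto
    have "A' $$ (i,0) = (W' * (A * W)) $$ (i,0)"
      unfolding A'_def using W W' A by (simp add: assoc_mult_mat[of _ n n _ n _ n])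
    also have "\<dots> = row W' i \<bullet> col (A * W) 0" by (rule index_mult_mat(1)) (use i n0 W' AW in auto)
    also have "col (A * W) 0 = A *\<^sub>v v" using colW0 n0 W A by (simp add: col_mult2 mult_mat_vec_def)
    also have "\<dots> = e \<cdot>\<^sub>v col W 0" using Av colW0 by simp
    also have "row W' i \<bullet> (e \<cdot>\<^sub>v col W 0) = e * (row W' i \<bullet> col W 0)"
      using W W' i n0 by (auto intro!: scalar_prod_smult_right)
    also have "row W' i \<bullet> col W 0 = (W' * W) $$ (i,0)" using i n0 W W' by simp
    also have "\<dots> = (if i = 0 then 1 else 0)" using W'W i n0 by simp
    finally show ?thesis by simp
  qed
  have nn: "n = 1 + n1" unfolding n_def by simp
  obtain A1 A2 A0 A3 where splitA': "split_block A' 1 1 = (A1,A2,A0,A3)"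
    by (cases "split_block A' 1 1", auto)
  from A' have "dim_row A' = 1 + n1" "dim_col A' = 1 + n1" using nn by auto
  from split_block[OF splitA' this] have A2: "A2 \<in> carrier_mat 1 n1"
    and A3: "A3 \<in> carrier_mat n1 n1" and A1: "A1 \<in> carrier_mat 1 1" and A0: "A0 \<in> carrier_mat n1 1"
    and A'block: "A' = four_block_mat A1 A2 A0 A3" by auto
  have A1id: "A1 = mat 1 1 (\<lambda> _. e)"
    using splitA'[unfolded split_block_def Let_def] A'0[of 0] n0 by auto
  have A0id: "A0 = 0\<^sub>m n1 1"
    using splitA'[unfolded split_block_def Let_def] A'0 A' nn by auto
  obtain B3 P3 Q3 where simIH: "similar_mat_wit A3 B3 P3 Q3" and ut3: "upper_triangular B3"
  proof (cases "n1 = 0")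
    case True
    have "upper_triangular A3" using A3 True by (auto intro!: upper_triangularI)
    thus ?thesis using that[OF similar_mat_wit_refl[OF A3]] by blast
  next
    case False
    from ev_exists[OF A3] False obtain e3 where "eigenvalue A3 e3" by auto
    from Suc(1)[OF A3 this] that show ?thesis by blast
  qed
  from similar_mat_witD2[OF A3 simIH]
  have B3: "B3 \<in> carrier_mat n1 n1" and P3: "P3 \<in> carrier_mat n1 n1" and Q3: "Q3 \<in> carrier_mat n1 n1"
    and PQ3: "P3 * Q3 = 1\<^sub>m n1" by auto
  let ?P' = "four_block_mat (1\<^sub>m 1) (0\<^sub>m 1 n1) (0\<^sub>m n1 1) P3"
  let ?Q' = "four_block_mat (1\<^sub>m 1) (0\<^sub>m 1 n1) (0\<^sub>m n1 1) Q3"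
  define C where "C = four_block_mat A1 (A2 * P3) A0 B3"
  have A0_eq: "A0 = P3 * A0 * 1\<^sub>m 1" unfolding A0id using P3 by auto
  have simA'C: "similar_mat_wit A' C ?P' ?Q'" unfolding A'block C_def
    by (rule similar_mat_wit_four_block[OF similar_mat_wit_refl[OF A1] simIH _ A0_eq A1 A3 A0],
    insert PQ3 A2 P3 Q3, auto)
  have ut1: "upper_triangular A1" unfolding A1id by auto
  have ut: "upper_triangular C" unfolding C_def A0id
    by (intro upper_triangular_four_block[OF _ B3 ut1 ut3], auto simp: A1id)
  have C00: "C $$ (0,0) = e" unfolding C_def A1id using A2 P3 B3 by auto
  from ut C00 similar_mat_wit_trans[OF simAA' simA'C]
  show ?case by blast
qed

lemma triang:
  fixes A :: "'a::alg_closed_field mat"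
  assumes A: "A \<in> carrier_mat n n"
  shows "\<exists>B P Q. similar_mat_wit A B P Q \<and> upper_triangular B"
proof (cases "n = 0")
  case True
  have "upper_triangular A" using A True by (auto intro!: upper_triangularI)
  thus ?thesis using similar_mat_wit_refl[OF A] by blast
next
  case False
  with ev_exists[OF A] obtain e where "eigenvalue A e" by auto
  from triang_ev[OF A this] show ?thesis by blast
qed

fun rprod :: "'a::field mat \<Rightarrow> (nat \<Rightarrow> 'a) \<Rightarrow> nat \<Rightarrow> nat \<Rightarrow> 'a mat" where
  "rprod M f n 0 = 1\<^sub>m n"
| "rprod M f n (Suc m) = (M - f (n - Suc m) \<cdot>\<^sub>m 1\<^sub>m n) * rprod M f n m"

lemma rprod_carrier: "M \<in> carrier_mat n n \<Longrightarrow> rprod M f n m \<in> carrier_mat n n"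
  by (induct m) auto

lemma sum_single:
  assumes "finite S" "k \<in> S" "\<And>j. j \<in> S \<Longrightarrow> j \<noteq> k \<Longrightarrow> g j = 0"
  shows "sum g S = g k"
proof -
  have "sum g S = sum g {k}"
    by (rule sum.mono_neutral_right) (use assms in auto)
  thus ?thesis by simp
qed

lemma rprod_rows:
  fixes T :: "'a::field mat"
  assumes T: "T \<in> carrier_mat n n" and ut: "upper_triangular T"
  shows "m \<le> n \<Longrightarrow> i < n \<Longrightarrow> n - m \<le> i \<Longrightarrow> j < n \<Longrightarrow> (rprod T (\<lambda>k. T$$(k,k)) n m)$$(i,j) = 0"
proof (induct m arbitrary: i j)
  case 0 thus ?case by simp
next
  case (Suc m)
  let ?d = "\<lambda>k. T$$(k,k)"
  define N where "N = T - ?d (n - Suc m) \<cdot>\<^sub>m 1\<^sub>m n"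
  define R where "R = rprod T ?d n m"
  have N: "N \<in> carrier_mat n n" unfolding N_def using T by auto
  have R: "R \<in> carrier_mat n n" unfolding R_def using rprod_carrier[OF T] by auto
  have "(rprod T ?d n (Suc m))$$(i,j) = (N * R)$$(i,j)" unfolding N_def R_def by simp
  also have "\<dots> = (\<Sum>k<n. N$$(i,k)*R$$(k,j))" using Suc by (intro mult_ent[OF N R]) auto
  also have "\<dots> = 0"
  proof (rule sum.neutral, intro ballI)
    fix k assume k: "k \<in> {..<n}"
    show "N$$(i,k)*R$$(k,j) = 0"
    proof (cases "k < i")
      case True
      thus ?thesis unfolding N_def using T k Suc utD[OF ut T True] by auto
    next
      case False
      show ?thesis
      proof (cases "n - m \<le> k")
        case True
        hence "R$$(k,j) = 0" unfolding R_def using Suc k by (intro Suc(1)) auto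
        thus ?thesis by simp
      next
        case False2: False
        hence "k = i" "i = n - Suc m" using False Suc by auto
        thus ?thesis unfolding N_def using T Suc by auto
      qed
    qed
  qed
  finally show ?case .
qed

lemma rprod_ut:
  fixes T :: "'a::field mat"
  assumes T: "T \<in> carrier_mat n n" and ut: "upper_triangular T"
  shows "m \<le> n \<Longrightarrow> upper_triangular (rprod T f n m) \<and>
     (\<forall>i<n. (rprod T f n m)$$(i,i) = (\<Prod>j\<in>{n-m..<n}. T$$(i,i) - f j))"
proof (induct m)
  case 0 thus ?case by auto
next
  case (Suc m)
  have N: "T - f (n - Suc m) \<cdot>\<^sub>m 1\<^sub>m n \<in> carrier_mat n n" using T by auto
  note um = ut_minus[OF T ut, where d = "f (n - Suc m)"]
  note R = rprod_carrier[OF T, of f m]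
  note uu = ut_mult[OF N R um(1)]
  show ?case
  proof (intro conjI allI impI)
    show "upper_triangular (rprod T f n (Suc m))" using uu Suc by simp
    fix i assume i: "i < n"
    have "(rprod T f n (Suc m))$$(i,i) = (T$$(i,i) - f (n - Suc m)) * (\<Prod>j\<in>{n-m..<n}. T$$(i,i) - f j)"
      using uu(2)[of i] Suc i um(2)[of i] by simp
    also have "\<dots> = (\<Prod>j\<in>{n-Suc m..<n}. T$$(i,i) - f j)"
    proof -
      have "{n-Suc m..<n} = insert (n - Suc m) {n-m..<n}" using Suc by auto
      thus ?thesis using Suc by (simp add: prod.insert)
    qed
    finally show "(rprod T f n (Suc m))$$(i,i) = (\<Prod>j\<in>{n-Suc m..<n}. T$$(i,i) - f j)" .
  qed
qed

lemma ut_inv_diag: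
  fixes T S :: "'a::field mat"
  assumes T: "T \<in> carrier_mat n n" and S: "S \<in> carrier_mat n n" and ut: "upper_triangular T"
    and TS: "T * S = 1\<^sub>m n" and nz: "\<And>i. i < n \<Longrightarrow> T$$(i,i) \<noteq> 0"
  shows "\<And>i. i < n \<Longrightarrow> S$$(i,i) = 1 / T$$(i,i)"
proof -
  have low: "\<forall>i. j < i \<longrightarrow> i < n \<longrightarrow> n - i \<le> q \<longrightarrow> S$$(i,j) = 0" for j q
  proof (induct q)
    case 0 thus ?case by auto
  next
    case (Suc q)
    show ?case
    proof (intro allI impI)
      fix i assume ji: "j < i" and i: "i < n" and q: "n - i \<le> Suc q"
      have "0 = (T * S)$$(i,j)" using TS ji i by simp
      also have "\<dots> = (\<Sum>k<n. T$$(i,k)*S$$(k,j))" using ji i by (intro mult_ent[OF T S]) auto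
      also have "\<dots> = T$$(i,i)*S$$(i,j)"
      proof (rule sum_single)
        fix k assume k: "k \<in> {..<n}" "k \<noteq> i"
        show "T$$(i,k)*S$$(k,j) = 0"
        proof (cases "k < i")
          case True thus ?thesis using utD[OF ut T True] i by simp
        next
          case False
          hence "S$$(k,j) = 0" using Suc k ji q by auto
          thus ?thesis by simp
        qed
      qed (use i in auto)
      finally show "S$$(i,j) = 0" using nz[OF i] by simp
    qed
  qed
  fix i assume i: "i < n"
  have "1 = (T * S)$$(i,i)" using TS i by simp
  also have "\<dots> = (\<Sum>k<n. T$$(i,k)*S$$(k,i))" using i by (intro mult_ent[OF T S]) auto
  also have "\<dots> = T$$(i,i)*S$$(i,i)"
  proof (rule sum_single)
    fix k assume k: "k \<in> {..<n}" "k \<noteq> i"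
    show "T$$(i,k)*S$$(k,i) = 0"
    proof (cases "k < i")
      case True thus ?thesis using utD[OF ut T True] i by simp
    next
      case False
      hence "S$$(k,i) = 0" using low[of i n] k by auto
      thus ?thesis by simp
    qed
  qed (use i in auto)
  finally show "S$$(i,i) = 1 / T$$(i,i)" using nz[OF i] by (simp add: field_simps)
qed

lemma vecsD: "x \<in> vecs r \<Longrightarrow> i \<ge> r \<Longrightarrow> x i = 0" by (simp add: vecs_def)
lemma vecsI: "(\<And>i. i \<ge> r \<Longrightarrow> x i = 0) \<Longrightarrow> x \<in> vecs r" by (simp add: vecs_def)

lemma amult_vecs[simp]: "amult r c x y \<in> vecs r"
  by (simp add: vecs_def amult_def)

lemma bvec_vecs[simp]: "i < r \<Longrightarrow> bvec i \<in> vecs r"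
  by (simp add: vecs_def bvec_def)

lemma vec_decomp:
  assumes "x \<in> vecs r"
  shows "x = (\<lambda>l. \<Sum>k<r. x k * bvec k l)"
proof
  fix l
  show "x l = (\<Sum>k<r. x k * bvec k l)"
  proof (cases "l < r")
    case True
    have "(\<Sum>k<r. x k * bvec k l) = (\<Sum>k\<in>{l}. x k * bvec k l)"
      by (rule sum.mono_neutral_right) (use True in \<open>auto simp: bvec_def\<close>)
    thus ?thesis by (simp add: bvec_def)
  next
    case False thus ?thesis using assms by (simp add: vecs_def bvec_def)
  qed
qed

lemma amult_lin1:
  assumes "finite S"
  shows "amult r c (\<lambda>l. \<Sum>k\<in>S. a k * f k l) y = (\<lambda>l. \<Sum>k\<in>S. a k * amult r c (f k) y l)"
proof
  fix l
  show "amult r c (\<lambda>l. \<Sum>k\<in>S. a k * f k l) y l = (\<Sum>k\<in>S. a k * amult r c (f k) y l)"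
  proof (cases "l < r")
    case True
    have "amult r c (\<lambda>l. \<Sum>k\<in>S. a k * f k l) y l =
        (\<Sum>i<r. \<Sum>j<r. \<Sum>k\<in>S. a k * (f k i * y j * c i j l))"
      using True by (simp add: amult_def sum_distrib_right mult.assoc)
    also have "\<dots> = (\<Sum>i<r. \<Sum>k\<in>S. \<Sum>j<r. a k * (f k i * y j * c i j l))"
      by (rule sum.cong[OF refl], rule sum.swap)
    also have "\<dots> = (\<Sum>k\<in>S. \<Sum>i<r. \<Sum>j<r. a k * (f k i * y j * c i j l))"
      by (rule sum.swap)
    also have "\<dots> = (\<Sum>k\<in>S. a k * amult r c (f k) y l)"
      using True by (simp add: amult_def sum_distrib_left)
    finally show ?thesis .
  next
    case False thus ?thesis by (simp add: amult_def)
  qed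
qed

lemma amult_lin1':
  "amult r c (\<lambda>l. x l - a * y l) z = (\<lambda>l. amult r c x z l - a * amult r c y z l)"
  by (rule ext) (simp add: amult_def algebra_simps sum_subtractf sum_distrib_left)

lemma counit_lin:
  "counit r e (\<lambda>l. \<Sum>k\<in>S. a k * f k l) = (\<Sum>k\<in>S. a k * counit r e (f k))"
proof -
  have "(\<Sum>i<r. e i * (\<Sum>k\<in>S. a k * f k i)) = (\<Sum>i<r. \<Sum>k\<in>S. e i * (a k * f k i))"
    by (simp add: sum_distrib_left)
  also have "\<dots> = (\<Sum>k\<in>S. \<Sum>i<r. e i * (a k * f k i))" by (rule sum.swap)
  also have "\<dots> = (\<Sum>k\<in>S. a k * (\<Sum>i<r. e i * f k i))"
    by (simp add: sum_distrib_left algebra_simps)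
  finally show ?thesis unfolding counit_def .
qed

lemma counit_zero[simp]: "counit r e (\<lambda>_. 0) = 0"
  by (simp add: counit_def)

lemma amult_zero1[simp]: "amult r c (\<lambda>_. 0) y = (\<lambda>_. 0)"
  by (rule ext) (simp add: amult_def)

definition Lm :: "nat \<Rightarrow> (nat \<Rightarrow> nat \<Rightarrow> nat \<Rightarrow> 'k::field) \<Rightarrow> (nat \<Rightarrow> 'k) \<Rightarrow> 'k mat" where
  "Lm r c x = mat r r (\<lambda>(l,i). amult r c x (bvec i) l)"

definition vv :: "nat \<Rightarrow> (nat \<Rightarrow> 'k::field) \<Rightarrow> 'k vec" where
  "vv r x = vec r x"

definition unv :: "'k::field vec \<Rightarrow> nat \<Rightarrow> 'k" where
  "unv w = (\<lambda>i. if i < dim_vec w then w $ i else 0)"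

lemma Lm_carrier[simp]: "Lm r c x \<in> carrier_mat r r" by (simp add: Lm_def)
lemma Lm_dims[simp]: "dim_row (Lm r c x) = r" "dim_col (Lm r c x) = r" by (simp_all add: Lm_def)
lemma vv_carrier[simp]: "vv r x \<in> carrier_vec r" by (simp add: vv_def)

lemma amult_bvec: "i < r \<Longrightarrow> amult r c x (bvec i) l = (if l < r then (\<Sum>a<r. x a * c a i l) else 0)"
proof -
  assume i: "i < r"
  have "(\<Sum>j<r. x a * bvec i j * c a j l) = x a * c a i l" for a
  proof -
    have "(\<Sum>j<r. x a * bvec i j * c a j l) = (\<Sum>j\<in>{i}. x a * bvec i j * c a j l)"
      by (rule sum.mono_neutral_right) (use i in \<open>auto simp: bvec_def\<close>)
    thus ?thesis by (simp add: bvec_def)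
  qed
  thus ?thesis by (simp add: amult_def)
qed

lemma amult_Lm:
  "amult r c x y = unv (Lm r c x *\<^sub>v vv r y)"
proof
  fix l
  show "amult r c x y l = unv (Lm r c x *\<^sub>v vv r y) l"
  proof (cases "l < r")
    case True
    have "unv (Lm r c x *\<^sub>v vv r y) l = (\<Sum>i<r. (\<Sum>a<r. x a * c a i l) * y i)"
      using True by (auto simp: unv_def Lm_def vv_def scalar_prod_def amult_bvec lessThan_atLeast0 intro!: sum.cong)
    also have "\<dots> = (\<Sum>i<r. \<Sum>a<r. x a * y i * c a i l)"
      by (simp add: sum_distrib_left sum_distrib_right mult_ac)
    also have "\<dots> = (\<Sum>a<r. \<Sum>i<r. x a * y i * c a i l)"
      by (rule sum.swap)
    also have "\<dots> = amult r c x y l" using True by (simp add: amult_def)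
    finally show ?thesis by simp
  next
    case False thus ?thesis by (simp add: amult_def unv_def)
  qed
qed

lemma unv_vv: "x \<in> vecs r \<Longrightarrow> unv (vv r x) = x"
  by (rule ext) (auto simp: unv_def vv_def vecs_def)

lemma vv_unv: "w \<in> carrier_vec r \<Longrightarrow> vv r (unv w) = w"
  by (auto simp: unv_def vv_def)

lemma unv_vecs[simp]: "w \<in> carrier_vec r \<Longrightarrow> unv w \<in> vecs r"
  by (auto simp: unv_def vecs_def)

lemma Lm_entry: "l < r \<Longrightarrow> i < r \<Longrightarrow> Lm r c x $$ (l,i) = amult r c x (bvec i) l"
  by (simp add: Lm_def)

lemma Lm_lin: "Lm r c (\<lambda>l. x l - a * y l) = Lm r c x - a \<cdot>\<^sub>m Lm r c y"
  by (rule eq_matI) (auto simp: Lm_def amult_lin1')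

context
  fixes r :: nat and c :: "nat \<Rightarrow> nat \<Rightarrow> nat \<Rightarrow> 'k::field" and u e :: "nat \<Rightarrow> 'k"
  assumes CF: "comm_frobenius r c u e"
begin

lemma comm: "x \<in> vecs r \<Longrightarrow> y \<in> vecs r \<Longrightarrow> amult r c x y = amult r c y x"
  using CF unfolding comm_frobenius_def by blast
lemma assoc: "x \<in> vecs r \<Longrightarrow> y \<in> vecs r \<Longrightarrow> z \<in> vecs r \<Longrightarrow>
   amult r c (amult r c x y) z = amult r c x (amult r c y z)"
  using CF unfolding comm_frobenius_def by blast
lemma u_vecs[simp]: "u \<in> vecs r" using CF unfolding comm_frobenius_def by blast
lemma unit_l: "x \<in> vecs r \<Longrightarrow> amult r c u x = x" using CF unfolding comm_frobenius_def by blast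
lemma unit_r: "x \<in> vecs r \<Longrightarrow> amult r c x u = x" using comm[of x u] unit_l[of x] by simp
lemma nondeg: "x \<in> vecs r \<Longrightarrow> (\<And>y. y \<in> vecs r \<Longrightarrow> counit r e (amult r c x y) = 0) \<Longrightarrow> x = (\<lambda>_. 0)"
  using CF unfolding comm_frobenius_def by blast

lemma Lm_mult: "x \<in> vecs r \<Longrightarrow> y \<in> vecs r \<Longrightarrow> Lm r c (amult r c x y) = Lm r c x * Lm r c y"
proof (rule eq_matI)
  fix l i assume x: "x \<in> vecs r" and y: "y \<in> vecs r"
    and l: "l < dim_row (Lm r c x * Lm r c y)" and i: "i < dim_col (Lm r c x * Lm r c y)"
  hence l: "l < r" and i: "i < r" by auto
  have "Lm r c (amult r c x y) $$ (l,i) = amult r c x (amult r c y (bvec i)) l"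
    using l i x y by (simp add: Lm_def assoc)
  also have "\<dots> = (Lm r c x *\<^sub>v vv r (amult r c y (bvec i))) $ l"
    using l by (simp add: amult_Lm[of r c x] unv_def)
  also have "\<dots> = (\<Sum>k<r. Lm r c x $$ (l,k) * Lm r c y $$ (k,i))"
    using l i by (auto simp: scalar_prod_def vv_def Lm_def lessThan_atLeast0 intro!: sum.cong)
  also have "\<dots> = (Lm r c x * Lm r c y) $$ (l,i)"
    using l i by (simp add: mult_ent[OF Lm_carrier Lm_carrier] del: index_mult_mat(1))
  finally show "Lm r c (amult r c x y) $$ (l,i) = (Lm r c x * Lm r c y) $$ (l,i)" .
qed auto

lemma Lm_u: "Lm r c u = 1\<^sub>m r"
proof (rule eq_matI)
  fix l i assume "l < dim_row (1\<^sub>m r)" "i < dim_col (1\<^sub>m r)"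
  hence l: "l < r" and i: "i < r" by auto
  have "amult r c u (bvec i) = bvec i" by (rule unit_l) (use i in simp)
  thus "Lm r c u $$ (l,i) = 1\<^sub>m r $$ (l,i)" using l i by (simp add: Lm_def bvec_def)
qed auto

lemma vec_of_Lm: "x \<in> vecs r \<Longrightarrow> x = unv (Lm r c x *\<^sub>v vv r u)"
  using amult_Lm[of r c x u] unit_r by simp

lemma Lm_zero_imp: "x \<in> vecs r \<Longrightarrow> Lm r c x = 0\<^sub>m r r \<Longrightarrow> x = (\<lambda>_. 0)"
  using vec_of_Lm[of x] by (auto simp: unv_def)

end

lemma amult_exp1:
  "x \<in> vecs r \<Longrightarrow> amult r c x y = (\<lambda>l. \<Sum>k<r. x k * amult r c (bvec k) y l)"
  using amult_lin1[where S="{..<r}" and r=r and c=c and a=x and f="\<lambda>k. bvec k" and y=y] vec_decomp[of x r] by simp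

lemma cu_exp1:
  "x \<in> vecs r \<Longrightarrow> counit r e (amult r c x y) = (\<Sum>k<r. x k * counit r e (amult r c (bvec k) y))"
  using amult_exp1[of x r c y] counit_lin[where r=r and e=e and S="{..<r}" and a=x and f="\<lambda>k. amult r c (bvec k) y"] by simp

context
  fixes r :: nat and c :: "nat \<Rightarrow> nat \<Rightarrow> nat \<Rightarrow> 'k::field" and u e :: "nat \<Rightarrow> 'k"
  assumes CF: "comm_frobenius r c u e"
begin

lemma cu_exp2:
  "x \<in> vecs r \<Longrightarrow> y \<in> vecs r \<Longrightarrow> counit r e (amult r c y x) = (\<Sum>k<r. x k * counit r e (amult r c (bvec k) y))"
  using cu_exp1[where x=x and r=r and c=c and e=e and y=y] comm[OF CF, of x y] by simp

definition gram :: "'k mat" where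
  "gram = mat r r (\<lambda>(i,j). counit r e (amult r c (bvec i) (bvec j)))"

lemma gram_det: "det gram \<noteq> 0"
proof
  assume "det gram = 0"
  have G: "gram \<in> carrier_mat r r" by (simp add: gram_def)
  from \<open>det gram = 0\<close> obtain w where w: "w \<in> carrier_vec r" "w \<noteq> 0\<^sub>v r" "gram *\<^sub>v w = 0\<^sub>v r"
    using det_0_iff_vec_prod_zero_field[OF G] by blast
  have gw: "(gram *\<^sub>v w) $ i = 0" if "i < r" for i using w(3) that by simp
  define y where "y = unv w"
  have y: "y \<in> vecs r" unfolding y_def using w by simp
  have ei: "counit r e (amult r c (bvec i) y) = 0" if i: "i < r" for i
  proof -
    have "counit r e (amult r c (bvec i) y) = (\<Sum>k<r. y k * counit r e (amult r c (bvec k) (bvec i)))"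
      using cu_exp2[OF y, of "bvec i"] i by simp
    also have "\<dots> = (\<Sum>k<r. gram $$ (i,k) * w $ k)"
      using i w comm[OF CF, of "bvec i"] by (auto simp: gram_def y_def unv_def intro!: sum.cong)
    also have "\<dots> = (gram *\<^sub>v w) $ i"
      using i w(1) by (auto simp: gram_def scalar_prod_def lessThan_atLeast0 intro!: sum.cong)
    also have "\<dots> = 0" using gw i by blast
    finally show ?thesis .
  qed
  have "y = (\<lambda>_. 0)"
  proof (rule nondeg[OF CF y])
    fix z :: "nat \<Rightarrow> 'k" assume z: "z \<in> vecs r"
    have "counit r e (amult r c y z) = counit r e (amult r c z y)" using comm[OF CF y z] by simp
    also have "\<dots> = (\<Sum>k<r. z k * counit r e (amult r c (bvec k) y))" using cu_exp1[OF z] by simp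
    also have "\<dots> = 0" using ei by simp
    finally show "counit r e (amult r c y z) = 0" .
  qed
  hence yz: "\<And>i. y i = 0" by simp
  have "w = 0\<^sub>v r"
  proof (rule eq_vecI)
    fix i assume "i < dim_vec (0\<^sub>v r :: 'k vec)"
    thus "w $ i = 0\<^sub>v r $ i" using yz[of i] w(1) unfolding y_def unv_def by auto
  qed (use w(1) in auto)
  thus False using w by simp
qed

lemma dual_exists: "\<exists>v. is_dual_basis r c e v"
proof -
  have G: "gram \<in> carrier_mat r r" by (simp add: gram_def)
  from inv_ex[OF G gram_det] obtain H where H: "H \<in> carrier_mat r r" and GH: "gram * H = 1\<^sub>m r" by blast
  define v where "v = (\<lambda>j k. if k < r then H $$ (k,j) else 0)"
  have "is_dual_basis r c e v"
    unfolding is_dual_basis_def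
  proof (intro conjI allI impI)
    fix j assume "j < r" show "v j \<in> vecs r" by (simp add: v_def vecs_def)
  next
    fix i j assume i: "i < r" and j: "j < r"
    have vj: "v j \<in> vecs r" by (simp add: v_def vecs_def)
    have "counit r e (amult r c (bvec i) (v j)) = (\<Sum>k<r. v j k * counit r e (amult r c (bvec k) (bvec i)))"
      using cu_exp2[OF vj bvec_vecs[OF i]] by simp
    also have "\<dots> = (\<Sum>k<r. gram $$ (i,k) * H $$ (k,j))"
      using i comm[OF CF, of "bvec i"] by (auto simp: gram_def v_def intro!: sum.cong)
    also have "\<dots> = (gram * H) $$ (i,j)" using i j by (simp add: mult_ent[OF G H] del: index_mult_mat(1))
    also have "\<dots> = (if i = j then 1 else 0)" using GH i j by simp
    finally show "counit r e (amult r c (bvec i) (v j)) = (if i = j then 1 else 0)" .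
  qed
  thus ?thesis by blast
qed

abbreviation "hh \<equiv> handle r c e"

lemma handle_vecs: "hh \<in> vecs r"
  unfolding handle_def Let_def by (rule vecsI) (simp add: amult_def)

lemma handle_tr: "x \<in> vecs r \<Longrightarrow> counit r e (amult r c hh x) = mtr (Lm r c x)"
proof -
  assume x: "x \<in> vecs r"
  define v where "v = (SOME v. is_dual_basis r c e v)"
  have dv: "is_dual_basis r c e v" unfolding v_def using dual_exists by (rule someI_ex)
  have vv: "v i \<in> vecs r" if "i < r" for i using dv that by (simp add: is_dual_basis_def)
  have h: "hh = (\<lambda>l. \<Sum>i<r. 1 * amult r c (bvec i) (v i) l)" unfolding handle_def Let_def v_def by simp
  have "amult r c hh x = (\<lambda>l. \<Sum>i<r. 1 * amult r c (amult r c (bvec i) (v i)) x l)"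
    unfolding h by (rule amult_lin1) simp
  hence "counit r e (amult r c hh x) = (\<Sum>i<r. counit r e (amult r c (amult r c (bvec i) (v i)) x))"
    using counit_lin[where r=r and e=e and S="{..<r}" and a="\<lambda>_. 1"] by simp
  also have "\<dots> = (\<Sum>i<r. Lm r c x $$ (i,i))"
  proof (rule sum.cong[OF refl])
    fix i assume i: "i \<in> {..<r}"
    have "amult r c (amult r c (bvec i) (v i)) x = amult r c (amult r c x (bvec i)) (v i)"
      using i vv[of i] x comm[OF CF] assoc[OF CF] by (metis amult_vecs bvec_vecs lessThan_iff)
    hence "counit r e (amult r c (amult r c (bvec i) (v i)) x) =
       (\<Sum>k<r. amult r c x (bvec i) k * counit r e (amult r c (bvec k) (v i)))"
      using cu_exp1[where x="amult r c x (bvec i)" and r=r and c=c and e=e and y="v i"] by simp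
    also have "\<dots> = (\<Sum>k<r. amult r c x (bvec i) k * (if k = i then 1 else 0))"
      using dv i by (auto simp: is_dual_basis_def intro!: sum.cong)
    also have "\<dots> = amult r c x (bvec i) i" using i by (simp add: if_distrib cong: if_cong)
    also have "\<dots> = Lm r c x $$ (i,i)" using i by (simp add: Lm_entry)
    finally show "counit r e (amult r c (amult r c (bvec i) (v i)) x) = Lm r c x $$ (i,i)" .
  qed
  also have "\<dots> = mtr (Lm r c x)" by (simp add: mtr_def)
  finally show ?thesis .
qed

definition pw :: "nat \<Rightarrow> nat \<Rightarrow> 'k" where "pw g = (amult r c hh ^^ g) u"

lemma pw_vecs: "pw g \<in> vecs r"
  by (cases g) (simp_all add: pw_def u_vecs[OF CF])

lemma pw_Suc: "pw (Suc g) = amult r c hh (pw g)" by (simp add: pw_def)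

lemma Lm_pw: "Lm r c (pw g) = Lm r c hh ^\<^sub>m g"
proof (induct g)
  case 0 thus ?case by (simp add: pw_def Lm_u[OF CF])
next
  case (Suc g)
  have "Lm r c (pw (Suc g)) = Lm r c (amult r c (pw g) hh)"
    using comm[OF CF pw_vecs handle_vecs] by (simp add: pw_Suc)
  also have "\<dots> = Lm r c (pw g) * Lm r c hh" by (rule Lm_mult[OF CF pw_vecs handle_vecs])
  finally show ?case using Suc by simp
qed

lemma genfun_0: "fps_nth (genfun r c u e) 0 = counit r e u"
  by (simp add: genfun_def)

lemma genfun_Suc: "fps_nth (genfun r c u e) (Suc g) = mtr (Lm r c hh ^\<^sub>m g)"
proof -
  have "fps_nth (genfun r c u e) (Suc g) = counit r e (pw (Suc g))" by (simp add: genfun_def pw_def)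
  also have "\<dots> = mtr (Lm r c (pw g))" using handle_tr[OF pw_vecs] by (simp add: pw_Suc)
  finally show ?thesis by (simp add: Lm_pw)
qed

end

lemma sandwich_mult:
  fixes P X Y Q :: "'a::field mat"
  assumes c: "P \<in> carrier_mat n n" "X \<in> carrier_mat n n" "Y \<in> carrier_mat n n" "Q \<in> carrier_mat n n"
    and QP: "Q * P = 1\<^sub>m n"
  shows "(P * X * Q) * (P * Y * Q) = P * (X * Y) * Q"
proof -
  have "(P * X * Q) * (P * Y * Q) = P * X * (Q * P) * Y * Q"
    using c by (simp add: assoc_mult_mat[of _ n n _ n _ n])
  also have "\<dots> = P * (X * Y) * Q" using c QP by (simp add: assoc_mult_mat[of _ n n _ n _ n])
  finally show ?thesis .
qed

lemma minus_char: "A \<in> carrier_mat n n \<Longrightarrow> A - f \<cdot>\<^sub>m 1\<^sub>m n = char_matrix A f"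
  by (rule eq_matI) (auto simp: char_matrix_def)

lemma rprod_sim:
  fixes A T :: "'a::field mat"
  assumes sim: "similar_mat_wit A T P Q" and A: "A \<in> carrier_mat n n"
  shows "rprod A f n m = P * rprod T f n m * Q"
proof (induct m)
  note d = similar_mat_witD2[OF A sim]
  case 0 thus ?case using d by simp
next
  note d = similar_mat_witD2[OF A sim]
  case (Suc m)
  define g where "g = f (n - Suc m)"
  have "P * (T - g \<cdot>\<^sub>m 1\<^sub>m n) * Q = (P * T - P * (g \<cdot>\<^sub>m 1\<^sub>m n)) * Q"
    using d by (subst mult_minus_distrib_mat[of _ n n]) auto
  also have "\<dots> = P * T * Q - P * (g \<cdot>\<^sub>m 1\<^sub>m n) * Q"
    using d by (subst minus_mult_distrib_mat[of _ n n]) auto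
  also have "P * (g \<cdot>\<^sub>m 1\<^sub>m n) = g \<cdot>\<^sub>m P"
    using d(6) by (subst mult_smult_distrib[of _ n n]) auto
  also have "(g \<cdot>\<^sub>m P) * Q = g \<cdot>\<^sub>m 1\<^sub>m n" using d by (simp add: mult_smult_assoc_mat[of _ n n])
  finally have e1: "A - g \<cdot>\<^sub>m 1\<^sub>m n = P * (T - g \<cdot>\<^sub>m 1\<^sub>m n) * Q" using d by simp
  have "rprod A f n (Suc m) = (P * (T - g \<cdot>\<^sub>m 1\<^sub>m n) * Q) * (P * rprod T f n m * Q)"
    using Suc e1 by (simp add: g_def)
  also have "\<dots> = P * ((T - g \<cdot>\<^sub>m 1\<^sub>m n) * rprod T f n m) * Q"
    by (rule sandwich_mult) (use d rprod_carrier[OF d(5)] in auto)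
  finally show ?case by (simp add: g_def)
qed

context
  fixes r :: nat and c :: "nat \<Rightarrow> nat \<Rightarrow> nat \<Rightarrow> 'k::alg_closed_field" and u e :: "nat \<Rightarrow> 'k"
  assumes CF: "comm_frobenius r c u e"
begin

abbreviation "AA \<equiv> Lm r c (handle r c e)"

fun wp :: "(nat \<Rightarrow> 'k) \<Rightarrow> nat \<Rightarrow> nat \<Rightarrow> 'k" where
  "wp d 0 = u"
| "wp d (Suc m) = amult r c (\<lambda>l. handle r c e l - d (r - Suc m) * u l) (wp d m)"

lemma wp_vecs: "wp d m \<in> vecs r"
  by (cases m) (simp_all add: u_vecs[OF CF])

lemma Lm_wp: "Lm r c (wp d m) = rprod AA d r m"
proof (induct m)
  case 0 thus ?case by (simp add: Lm_u[OF CF])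
next
  case (Suc m)
  have hv: "(\<lambda>l. handle r c e l - d (r - Suc m) * u l) \<in> vecs r"
    using handle_vecs[OF CF] u_vecs[OF CF] by (auto simp: vecs_def)
  have "Lm r c (wp d (Suc m)) = Lm r c (\<lambda>l. handle r c e l - d (r - Suc m) * u l) * Lm r c (wp d m)"
    using Lm_mult[OF CF hv wp_vecs] by simp
  also have "Lm r c (\<lambda>l. handle r c e l - d (r - Suc m) * u l) = AA - d (r - Suc m) \<cdot>\<^sub>m 1\<^sub>m r"
    by (simp add: Lm_lin Lm_u[OF CF])
  finally show ?case using Suc by simp
qed

lemma no_single_zero:
  assumes sim: "similar_mat_wit AA T P Q" and ut: "upper_triangular T" and r: "r > 0"
    and T0: "T $$ (0,0) = 0" and nz: "\<And>i. 0 < i \<Longrightarrow> i < r \<Longrightarrow> T $$ (i,i) \<noteq> 0"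
  shows False
proof -
  define d where "d = (\<lambda>k. T $$ (k,k))"
  have A: "AA \<in> carrier_mat r r" by simp
  note sd = similar_mat_witD2[OF A sim]
  have T: "T \<in> carrier_mat r r" using sd by simp
  have "rprod T d r r = 0\<^sub>m r r"
    by (rule eq_matI) (use rprod_rows[OF T ut, of r] rprod_carrier[OF T, of d r] in \<open>auto simp: d_def\<close>)
  hence "Lm r c (wp d r) = 0\<^sub>m r r"
    using Lm_wp[of d r] rprod_sim[OF sim A, of d r] sd by simp
  hence w0: "wp d r = (\<lambda>_. 0)" by (rule Lm_zero_imp[OF CF wp_vecs])
  define m where "m = r - 1"
  have rm: "r = Suc m" using r unfolding m_def by simp
  have "wp d r = wp d (Suc m)" using rm by simp
  also have "\<dots> = amult r c (\<lambda>l. handle r c e l - d (r - Suc m) * u l) (wp d m)" by simp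
  also have "(\<lambda>l. handle r c e l - d (r - Suc m) * u l) = handle r c e" using rm T0 by (simp add: d_def)
  finally have "wp d r = amult r c (handle r c e) (wp d m)" .
  hence "counit r e (amult r c (handle r c e) (wp d m)) = 0" using w0 by (metis counit_zero)
  hence "mtr (Lm r c (wp d m)) = 0" using handle_tr[OF CF wp_vecs] by simp
  hence "mtr (P * rprod T d r m * Q) = 0" using Lm_wp[of d m] rprod_sim[OF sim A, of d m] by simp
  moreover have "similar_mat_wit (P * rprod T d r m * Q) (rprod T d r m) P Q"
    using sd rprod_carrier[OF T, of d m] by (intro similar_mat_witI[of P Q r]) auto
  ultimately have tr0: "mtr (rprod T d r m) = 0"
    using mtr_sim[of "P * rprod T d r m * Q" _ P Q r] sd rprod_carrier[OF T, of d m] by auto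
  have R: "rprod T d r m \<in> carrier_mat r r" by (rule rprod_carrier[OF T])
  have "mtr (rprod T d r m) = (\<Sum>i<r. rprod T d r m $$ (i,i))" using R by (simp add: mtr_def)
  also have "\<dots> = rprod T d r m $$ (0,0)"
  proof (rule sum_single)
    fix i assume "i \<in> {..<r}" "i \<noteq> 0"
    thus "rprod T d r m $$ (i,i) = 0"
      using rprod_rows[OF T ut, of m i i] unfolding d_def rm by auto
  qed (use r in auto)
  also have "\<dots> = (\<Prod>j\<in>{r-m..<r}. T$$(0,0) - d j)"
    using rprod_ut[OF T ut, of m d] r rm by simp
  also have "\<dots> \<noteq> 0"
    using nz T0 rm by (auto simp: d_def)
  finally show False using tr0 by simp
qed

lemma coeff_diag:
  assumes sim: "similar_mat_wit AA T P Q" and ut: "upper_triangular T"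
  shows "fps_nth (genfun r c u e) (Suc g) = (\<Sum>i<r. T$$(i,i) ^ g)"
proof -
  have A: "AA \<in> carrier_mat r r" by simp
  note sd = similar_mat_witD2[OF A sim]
  have T: "T \<in> carrier_mat r r" using sd by simp
  have "fps_nth (genfun r c u e) (Suc g) = mtr (AA ^\<^sub>m g)" by (rule genfun_Suc[OF CF])
  also have "\<dots> = mtr (T ^\<^sub>m g)"
  proof -
    have s: "similar_mat_wit (AA ^\<^sub>m g) (T ^\<^sub>m g) P Q" by (rule similar_mat_wit_pow[OF sim])
    have "AA ^\<^sub>m g \<in> carrier_mat r r" using A by simp
    from mtr_sim[OF s this] show ?thesis .
  qed
  also have "\<dots> = (\<Sum>i<r. T$$(i,i) ^ g)"
    using ut_pow[OF T ut, of g] T by (simp add: mtr_def)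
  finally show ?thesis .
qed

lemma all_nonzero_u:
  assumes sim: "similar_mat_wit AA T P Q" and ut: "upper_triangular T"
    and nz: "\<And>i. i < r \<Longrightarrow> T$$(i,i) \<noteq> 0"
  shows "counit r e u = (\<Sum>i<r. 1 / T$$(i,i))"
proof -
  have A: "AA \<in> carrier_mat r r" by simp
  note sd = similar_mat_witD2[OF A sim]
  have T: "T \<in> carrier_mat r r" and P: "P \<in> carrier_mat r r" and Q: "Q \<in> carrier_mat r r"
    using sd by auto
  have "det T = (\<Prod>i = 0..<r. T $$ (i,i))"
    using det_upper_triangular[OF ut T] prod_list_diag_prod[of T] T by simp
  also have "\<dots> \<noteq> 0" using nz by simp
  finally have dT: "det T \<noteq> 0" .
  from inv_ex[OF T dT] obtain TI where TI: "TI \<in> carrier_mat r r" and TTI: "T * TI = 1\<^sub>m r"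
    and TIT: "TI * T = 1\<^sub>m r" by blast
  define AI where "AI = P * TI * Q"
  have AI: "AI \<in> carrier_mat r r" unfolding AI_def using P TI Q by auto
  have AAI: "AA * AI = 1\<^sub>m r"
  proof -
    have "AA * AI = P * (T * TI) * Q" unfolding AI_def using sd
      by (subst sandwich_mult[symmetric, OF P T TI Q]) auto
    thus ?thesis using TTI sd P by simp
  qed
  have AIA: "AI * AA = 1\<^sub>m r"
  proof -
    have "AI * AA = P * (TI * T) * Q" unfolding AI_def using sd
      by (subst sandwich_mult[symmetric, OF P TI T Q]) auto
    thus ?thesis using TIT sd P by simp
  qed
  define y where "y = unv (AI *\<^sub>v vv r u)"
  have y: "y \<in> vecs r" unfolding y_def using AI by simp
  have "amult r c (handle r c e) y = unv (AA *\<^sub>v vv r y)" by (rule amult_Lm)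
  also have "vv r y = AI *\<^sub>v vv r u" unfolding y_def using AI by (simp add: vv_unv)
  also have "AA *\<^sub>v (AI *\<^sub>v vv r u) = (AA * AI) *\<^sub>v vv r u"
    using AI by (simp add: assoc_mult_mat_vec[of _ r r _ r])
  also have "\<dots> = vv r u" using AAI by simp
  finally have hy: "amult r c (handle r c e) y = u" using unv_vv[OF u_vecs[OF CF]] by simp
  have "AA * Lm r c y = 1\<^sub>m r"
    using Lm_mult[OF CF handle_vecs[OF CF] y] hy Lm_u[OF CF] by simp
  hence "AI * (AA * Lm r c y) = AI" using AI by simp
  hence LY: "Lm r c y = AI" using AIA AI by (simp add: assoc_mult_mat[of _ r r _ r _ r, symmetric])
  have "counit r e u = mtr (Lm r c y)" using handle_tr[OF CF y] hy by simp
  also have "\<dots> = mtr TI"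
    using LY AI sd TI by (intro mtr_sim[of _ _ P Q r]) (auto simp: AI_def intro!: similar_mat_witI[of P Q r])
  also have "\<dots> = (\<Sum>i<r. 1 / T$$(i,i))"
    using ut_inv_diag[OF T TI ut TTI nz] TI by (simp add: mtr_def)
  finally show ?thesis .
qed

end

lemma inv_geom: "inverse (1 - fps_const (a::'k::field) * fps_X) = Abs_fps (\<lambda>n. a^n)"
proof (rule fps_inverse_unique)
  show "(1 - fps_const a * fps_X) * Abs_fps (\<lambda>n. a^n) = 1"
  proof (rule fps_ext)
    fix n
    have "(1 - fps_const a * fps_X) * Abs_fps (\<lambda>n. a^n) =
       Abs_fps (\<lambda>n. a^n) - fps_const a * (fps_X * Abs_fps (\<lambda>n. a^n))"
      by (simp only: left_diff_distrib mult_1 mult.assoc)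
    thus "fps_nth ((1 - fps_const a * fps_X) * Abs_fps (\<lambda>n. a^n)) n = fps_nth 1 n"
      by (cases n) simp_all
  qed
qed

lemma geom_nth:
  "fps_nth (geom_part s ms lams) g = (\<Sum>i<s. of_nat (ms i) / lams i * lams i ^ g)"
  by (simp add: geom_part_def fps_sum_nth inv_geom)

lemma enum_nz:
  fixes n :: nat and d :: "nat \<Rightarrow> 'k::field"
  shows "\<exists>(s::nat) lams. (\<forall>j<s. lams j \<noteq> 0) \<and>
     (\<forall>f::'k::field \<Rightarrow> 'k. (\<Sum>j<s. f (lams j)) = (\<Sum>i\<in>{i. i<n \<and> d i \<noteq> 0}. f (d i)))"
proof (induct n)
  case 0
  show ?case by (intro exI[of _ "0::nat"] exI[of _ "\<lambda>_::nat. 0::'k"]) simp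
next
  case (Suc n)
  then obtain s :: nat and lams :: "nat \<Rightarrow> 'k" where l: "\<forall>j<s. lams j \<noteq> 0"
    and sm: "\<forall>f::'k \<Rightarrow> 'k. (\<Sum>j<s. f (lams j)) = (\<Sum>i\<in>{i. i<n \<and> d i \<noteq> 0}. f (d i))" by blast
  show ?case
  proof (cases "d n = 0")
    case True
    have "{i. i < Suc n \<and> d i \<noteq> 0} = {i. i<n \<and> d i \<noteq> 0}" using True less_Suc_eq by auto
    thus ?thesis using l sm by auto
  next
    case False
    have e: "{i. i < Suc n \<and> d i \<noteq> 0} = insert n {i. i<n \<and> d i \<noteq> 0}" using False less_Suc_eq by auto
    define lams' where "lams' = lams(s := d n)"
    have "\<forall>j<Suc s. lams' j \<noteq> 0" using l False by (auto simp: lams'_def less_Suc_eq)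
    moreover have "\<forall>f::'k \<Rightarrow> 'k. (\<Sum>j<Suc s. f (lams' j)) = (\<Sum>i\<in>{i. i<Suc n \<and> d i \<noteq> 0}. f (d i))"
    proof
      fix f :: "'k \<Rightarrow> 'k"
      have "(\<Sum>j<Suc s. f (lams' j)) = (\<Sum>j<s. f (lams j)) + f (d n)"
        by (simp add: lams'_def)
      also have "\<dots> = (\<Sum>i\<in>{i. i<Suc n \<and> d i \<noteq> 0}. f (d i))"
        unfolding e using sm by (simp add: add.commute)
      finally show "(\<Sum>j<Suc s. f (lams' j)) = (\<Sum>i\<in>{i. i<Suc n \<and> d i \<noteq> 0}. f (d i))" .
    qed
    ultimately show ?thesis by blast
  qed
qed

lemma form_diag:
  fixes F :: "'k::field fps" and d :: "nat \<Rightarrow> 'k"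
  assumes co: "\<And>g. fps_nth F (Suc g) = (\<Sum>i<r. d i ^ g)"
  shows "\<exists>(s::nat) lams. (\<forall>j<s. lams j \<noteq> 0) \<and>
    F = fps_const (fps_nth F 0 - (\<Sum>i\<in>{i. i<r \<and> d i \<noteq> 0}. 1 / d i))
        + fps_const (of_nat (card {i. i<r \<and> d i = 0})) * fps_X + geom_part s (\<lambda>_. 1) lams"
proof -
  obtain s :: nat and lams :: "nat \<Rightarrow> 'k" where l: "\<forall>j<s. lams j \<noteq> 0"
    and sm: "\<forall>f::'k \<Rightarrow> 'k. (\<Sum>j<s. f (lams j)) = (\<Sum>i\<in>{i. i<r \<and> d i \<noteq> 0}. f (d i))"
    using enum_nz[where n=r and d=d] by blast
  define NZ where "NZ = {i. i<r \<and> d i \<noteq> 0}"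
  define Z where "Z = {i. i<r \<and> d i = 0}"
  have fin: "finite NZ" "finite Z" unfolding NZ_def Z_def by auto
  have un: "{..<r} = Z \<union> NZ" and dis: "Z \<inter> NZ = {}" unfolding NZ_def Z_def by auto
  have eq: "F = fps_const (fps_nth F 0 - (\<Sum>i\<in>NZ. 1 / d i))
        + fps_const (of_nat (card Z)) * fps_X + geom_part s (\<lambda>_. 1) lams"
  proof (rule fps_ext)
    fix n
    show "fps_nth F n = fps_nth (fps_const (fps_nth F 0 - (\<Sum>i\<in>NZ. 1 / d i))
        + fps_const (of_nat (card Z)) * fps_X + geom_part s (\<lambda>_. 1) lams) n"
    proof (cases n)
      case 0
      have "(\<Sum>i<s. 1 / lams i) = (\<Sum>i\<in>NZ. 1 / d i)" using sm[rule_format, of "\<lambda>x. 1 / x"] NZ_def by simp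
      thus ?thesis using 0 by (simp add: geom_nth)
    next
      case (Suc g)
      have "fps_nth F n = (\<Sum>i<r. d i ^ g)" using co Suc by simp
      also have "\<dots> = (\<Sum>i\<in>Z. d i ^ g) + (\<Sum>i\<in>NZ. d i ^ g)"
        unfolding un using fin dis by (simp add: sum.union_disjoint)
      also have "(\<Sum>i\<in>Z. d i ^ g) = of_nat (card Z) * (if g = 0 then 1 else 0)"
        by (simp add: Z_def)
      also have "(\<Sum>i\<in>NZ. d i ^ g) = (\<Sum>j<s. lams j ^ g)" using sm[rule_format, of "\<lambda>x. x ^ g"] NZ_def by simp
      also have "\<dots> = (\<Sum>j<s. 1 / lams j * lams j ^ Suc g)"
        using l by (intro sum.cong) (auto simp: field_simps)
      finally show ?thesis using Suc by (simp add: geom_nth fps_X_nth)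
    qed
  qed
  have eq': "F = fps_const (fps_nth F 0 - (\<Sum>i\<in>{i. i<r \<and> d i \<noteq> 0}. 1 / d i))
        + fps_const (of_nat (card {i. i<r \<and> d i = 0})) * fps_X + geom_part s (\<lambda>_. 1) lams"
    using eq unfolding NZ_def Z_def .
  show ?thesis
    by (rule exI[of _ s], rule exI[of _ lams], rule conjI[OF l eq'])
qed

theorem dir1:
  fixes c :: "nat \<Rightarrow> nat \<Rightarrow> nat \<Rightarrow> 'k::alg_closed_field"
  assumes CF: "comm_frobenius r c u e"
  shows "form1 (genfun r c u e) \<or> form2 (genfun r c u e)"
proof -
  define AA where "AA = Lm r c (handle r c e)"
  have A: "AA \<in> carrier_mat r r" unfolding AA_def by simp
  define F where "F = genfun r c u e"
  show ?thesis
  proof (cases "eigenvalue AA 0")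
    case True
    have r: "r > 0" using eigenvalue_imp_nonzero_dim[OF A True] .
    from triang_ev[OF A True] obtain T P Q where sim: "similar_mat_wit AA T P Q"
      and ut: "upper_triangular T" and T0: "T $$ (0,0) = 0" by blast
    define d where "d = (\<lambda>i. T $$ (i,i))"
    have co: "fps_nth F (Suc g) = (\<Sum>i<r. d i ^ g)" for g
      unfolding F_def d_def using coeff_diag[OF CF, of T P Q g] sim ut AA_def by simp
    from form_diag[where F=F and r=r and d=d, OF co] obtain s lams where l: "\<forall>j<s. lams j \<noteq> 0"
      and eq: "F = fps_const (fps_nth F 0 - (\<Sum>i\<in>{i. i<r \<and> d i \<noteq> 0}. 1 / d i))
        + fps_const (of_nat (card {i. i<r \<and> d i = 0})) * fps_X + geom_part s (\<lambda>_. 1) lams"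
      by blast
    define Z where "Z = {i. i<r \<and> d i = 0}"
    have finZ: "finite Z" unfolding Z_def by simp
    have z0: "0 \<in> Z" unfolding Z_def d_def using r T0 by simp
    show ?thesis
    proof (cases "card Z \<ge> 2")
      case True
      have "form1 F" unfolding form1_def
        by (rule exI[of _ "fps_nth F 0 - (\<Sum>i\<in>{i. i<r \<and> d i \<noteq> 0}. 1 / d i)"],
            rule exI[of _ "card Z"], rule exI[of _ s], rule exI[of _ "\<lambda>_. 1"], rule exI[of _ lams])
           (use True l eq in \<open>simp add: Z_def\<close>)
      thus ?thesis unfolding F_def by simp
    next
      case False
      have nz: "T $$ (i,i) \<noteq> 0" if i: "0 < i" "i < r" for i
      proof
        assume "T $$ (i,i) = 0"
        hence "{0, i} \<subseteq> Z" using z0 i unfolding Z_def d_def by auto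
        from card_mono[OF finZ this] i have "card Z \<ge> 2" by simp
        thus False using False by simp
      qed
      have "False"
        by (rule no_single_zero[OF CF _ ut r T0 nz]) (use sim AA_def in simp_all)
      thus ?thesis by simp
    qed
  next
    case False
    from triang[OF A] obtain T P Q where sim: "similar_mat_wit AA T P Q"
      and ut: "upper_triangular T" by blast
    note sd = similar_mat_witD2[OF A sim]
    define d where "d = (\<lambda>i. T $$ (i,i))"
    have nz: "T $$ (i,i) \<noteq> 0" if i: "i < r" for i
    proof
      assume z: "T $$ (i,i) = 0"
      have T: "T \<in> carrier_mat r r" using sd by simp
      have "det T = (\<Prod>i = 0..<r. T $$ (i,i))"
        using det_upper_triangular[OF ut T] prod_list_diag_prod[of T] T by simp
      also have "\<dots> = 0" using z i by (intro prod_zero) auto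
      finally have dT: "det T = 0" .
      have "det AA = det P * det T * det Q"
        using sd by (simp add: det_mult[of _ r])
      hence "det AA = 0" using dT by simp
      then obtain w where w: "w \<in> carrier_vec r" "w \<noteq> 0\<^sub>v r" "AA *\<^sub>v w = 0\<^sub>v r"
        using det_0_iff_vec_prod_zero_field[OF A] by blast
      have "eigenvector AA w 0" unfolding eigenvector_def using w A by auto
      hence "eigenvalue AA 0" unfolding eigenvalue_def by blast
      thus False using False by simp
    qed
    have co: "fps_nth F (Suc g) = (\<Sum>i<r. d i ^ g)" for g
      unfolding F_def d_def using coeff_diag[OF CF, of T P Q g] sim ut AA_def by simp
    from form_diag[where F=F and r=r and d=d, OF co] obtain s lams where l: "\<forall>j<s. lams j \<noteq> 0"
      and eq: "F = fps_const (fps_nth F 0 - (\<Sum>i\<in>{i. i<r \<and> d i \<noteq> 0}. 1 / d i))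
        + fps_const (of_nat (card {i. i<r \<and> d i = 0})) * fps_X + geom_part s (\<lambda>_. 1) lams"
      by blast
    have e1: "{i. i<r \<and> d i = 0} = {}" using nz unfolding d_def by auto
    have e2: "{i. i<r \<and> d i \<noteq> 0} = {..<r}" using nz unfolding d_def by auto
    have "fps_nth F 0 = (\<Sum>i<r. 1 / d i)"
      unfolding F_def d_def genfun_0[OF CF]
      by (rule all_nonzero_u[OF CF _ ut nz]) (use sim AA_def in simp)
    hence "F = geom_part s (\<lambda>_. 1) lams" using eq unfolding e1 e2 by simp
    hence "form2 F" unfolding form2_def using l
      by (intro exI[of _ s] exI[of _ "\<lambda>_. 1"] exI[of _ lams]) auto
    thus ?thesis unfolding F_def by simp
  qed
qed

lemma prefix_mult_l:
  fixes f g h :: "'a::comm_ring_1 fps"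
  assumes "\<And>i. i \<le> l \<Longrightarrow> fps_nth f i = fps_nth g i"
  shows "fps_nth (f * h) l = fps_nth (g * h) l"
  using assms by (simp add: fps_mult_nth)

lemma prefix_mult_r:
  fixes f g h :: "'a::comm_ring_1 fps"
  assumes "\<And>i. i \<le> l \<Longrightarrow> fps_nth f i = fps_nth g i"
  shows "fps_nth (h * f) l = fps_nth (h * g) l"
  using prefix_mult_l[where h=h, OF assms] by (simp add: mult.commute)

locale cons =
  fixes m N :: nat and mu :: "'k::field" and lam :: "nat \<Rightarrow> 'k"
  assumes m: "m = 0 \<or> m \<ge> 2" and lam: "\<And>t. t < N \<Longrightarrow> lam t \<noteq> 0" and mu: "m = 0 \<Longrightarrow> mu = 0"
begin

definition "rr = m + N"

definition cc :: "nat \<Rightarrow> nat \<Rightarrow> nat \<Rightarrow> 'k" where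
  "cc i j l = (if l < m then (if i < m \<and> j < m \<and> i + j = l then 1 else 0)
     else if l < rr then (if i = l \<and> j = l then 1 else 0) else 0)"

definition MM :: "(nat \<Rightarrow> 'k) \<Rightarrow> (nat \<Rightarrow> 'k) \<Rightarrow> nat \<Rightarrow> 'k" where
  "MM x y l = (if l < m then fps_nth (Abs_fps x * Abs_fps y) l else if l < rr then x l * y l else 0)"

definition uu :: "nat \<Rightarrow> 'k" where
  "uu l = (if l < m then (if l = 0 then 1 else 0) else if l < rr then 1 else 0)"

definition ee :: "nat \<Rightarrow> 'k" where
  "ee i = (if i < m then (if i = 0 then mu else 0) + (if i = m - 1 then 1 else 0)
     else if i < rr then 1 / lam (i - m) else 0)"

lemma amult_MM: "amult rr cc x y = MM x y"
proof
  fix l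
  show "amult rr cc x y l = MM x y l"
  proof (cases "l < m")
    case True
    hence lr: "l < rr" unfolding rr_def by simp
    have inner: "(\<Sum>j<rr. x i * y j * cc i j l) = (if i \<le> l then x i * y (l - i) else 0)" if i: "i < rr" for i
    proof (cases "i \<le> l")
      case True
      have "(\<Sum>j<rr. x i * y j * cc i j l) = x i * y (l - i) * cc i (l - i) l"
        by (rule sum_single) (use True \<open>l < m\<close> lr in \<open>auto simp: cc_def\<close>)
      thus ?thesis using True \<open>l < m\<close> by (simp add: cc_def)
    next
      case False thus ?thesis using \<open>l < m\<close> by (auto simp: cc_def intro!: sum.neutral)
    qed
    have "amult rr cc x y l = (\<Sum>i<rr. if i \<le> l then x i * y (l - i) else 0)"
      using lr inner by (simp add: amult_def)
    also have "\<dots> = (\<Sum>i\<in>{..<rr} \<inter> {i. i \<le> l}. x i * y (l - i))"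
      by (simp add: sum.inter_restrict)
    also have "{..<rr} \<inter> {i. i \<le> l} = {0..l}" using lr by auto
    also have "(\<Sum>i\<in>{0..l}. x i * y (l - i)) = MM x y l"
      using True by (simp add: MM_def fps_mult_nth)
    finally show ?thesis .
  next
    case False
    show ?thesis
    proof (cases "l < rr")
      case True
      have "amult rr cc x y l = (\<Sum>i<rr. \<Sum>j<rr. x i * y j * cc i j l)" using True by (simp add: amult_def)
      also have "\<dots> = (\<Sum>j<rr. x l * y j * cc l j l)"
        by (rule sum_single) (use True False in \<open>auto simp: cc_def intro!: sum.neutral\<close>)
      also have "\<dots> = x l * y l * cc l l l"
        by (rule sum_single) (use True False in \<open>auto simp: cc_def\<close>)
      also have "\<dots> = MM x y l" using True False by (simp add: cc_def MM_def)
      finally show ?thesis .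
    next
      case False2: False
      thus ?thesis using False by (simp add: amult_def MM_def rr_def)
    qed
  qed
qed

lemma MM_comm: "MM x y = MM y x"
  by (rule ext) (simp add: MM_def mult.commute)

lemma MM_assoc: "MM (MM x y) z = MM x (MM y z)"
proof
  fix l
  show "MM (MM x y) z l = MM x (MM y z) l"
  proof (cases "l < m")
    case True
    have "fps_nth (Abs_fps (MM x y) * Abs_fps z) l = fps_nth ((Abs_fps x * Abs_fps y) * Abs_fps z) l"
      by (rule prefix_mult_l) (use True in \<open>simp add: MM_def\<close>)
    also have "\<dots> = fps_nth (Abs_fps x * (Abs_fps y * Abs_fps z)) l" by (simp add: mult.assoc)
    also have "\<dots> = fps_nth (Abs_fps x * Abs_fps (MM y z)) l"
      by (rule prefix_mult_r) (use True in \<open>simp add: MM_def\<close>)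
    finally show ?thesis using True by (simp add: MM_def)
  next
    case False thus ?thesis by (simp add: MM_def mult.assoc)
  qed
qed

lemma sum_upto_single:
  fixes k l :: nat
  shows "k \<le> l \<Longrightarrow> (\<And>i. i \<le> l \<Longrightarrow> i \<noteq> k \<Longrightarrow> g i = 0) \<Longrightarrow> (\<Sum>i=0..l. g i) = (g k :: 'k)"
  using sum_single[of "{0..l}" k g] by auto

lemma MM_bvec_low: "l < m \<Longrightarrow> MM x (bvec k) l = (if k \<le> l then x (l - k) else 0)"
proof -
  assume l: "l < m"
  have "MM x (bvec k) l = (\<Sum>i=0..l. x i * bvec k (l - i))" using l by (simp add: MM_def fps_mult_nth)
  also have "\<dots> = (if k \<le> l then x (l - k) else 0)"
  proof (cases "k \<le> l")
    case True
    have "(\<Sum>i=0..l. x i * bvec k (l - i)) = x (l - k) * bvec k (l - (l - k))"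
      by (rule sum_upto_single) (use True in \<open>auto simp: bvec_def\<close>)
    thus ?thesis using True by (simp add: bvec_def)
  next
    case False thus ?thesis by (auto simp: bvec_def intro!: sum.neutral)
  qed
  finally show ?thesis .
qed

lemma MM_high: "\<not> l < m \<Longrightarrow> l < rr \<Longrightarrow> MM x y l = x l * y l"
  by (simp add: MM_def)

lemma uu_vecs: "uu \<in> vecs rr" by (simp add: uu_def vecs_def rr_def)

lemma MM_unit: "x \<in> vecs rr \<Longrightarrow> MM uu x = x"
proof
  fix l assume x: "x \<in> vecs rr"
  show "MM uu x l = x l"
  proof (cases "l < m")
    case True
    have "MM uu x l = (\<Sum>i=0..l. uu i * x (l - i))" using True by (simp add: MM_def fps_mult_nth)
    also have "\<dots> = uu 0 * x (l - 0)"
      by (rule sum_upto_single) (use True in \<open>auto simp: uu_def\<close>)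
    finally show ?thesis using True by (simp add: uu_def)
  next
    case False
    thus ?thesis using x by (cases "l < rr") (auto simp: MM_def uu_def vecs_def)
  qed
qed

lemma sum_split_rr: "(\<Sum>i<rr. f i) = (\<Sum>i<m. f i) + (\<Sum>t<N. f (m + t))"
  unfolding rr_def by (induct N) (simp_all add: add.assoc)

lemma counit_formula:
  "counit rr ee z = (if m = 0 then 0 else mu * z 0 + z (m - 1)) + (\<Sum>t<N. z (m + t) / lam t)"
proof -
  have "counit rr ee z = (\<Sum>i<m. ee i * z i) + (\<Sum>t<N. ee (m + t) * z (m + t))"
    unfolding counit_def by (rule sum_split_rr)
  also have "(\<Sum>t<N. ee (m + t) * z (m + t)) = (\<Sum>t<N. z (m + t) / lam t)"
    by (rule sum.cong) (auto simp: ee_def rr_def)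
  also have "(\<Sum>i<m. ee i * z i) = (if m = 0 then 0 else mu * z 0 + z (m - 1))"
  proof (cases "m = 0")
    case True thus ?thesis by simp
  next
    case False
    hence m2: "m \<ge> 2" using m by simp
    have "(\<Sum>i<m. ee i * z i) = (\<Sum>i<m. (if i = 0 then mu * z i else 0) + (if i = m - 1 then z i else 0))"
      by (rule sum.cong) (auto simp: ee_def algebra_simps)
    also have "\<dots> = mu * z 0 + z (m - 1)" using m2 by (simp add: sum.distrib)
    finally show ?thesis using False by simp
  qed
  finally show ?thesis .
qed

lemma nondeg_cons:
  assumes x: "x \<in> vecs rr" and nd: "\<And>y. y \<in> vecs rr \<Longrightarrow> counit rr ee (MM x y) = 0"
  shows "x = (\<lambda>_. 0)"
proof -
  have fld: "x (m + t) = 0" if t: "t < N" for t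
  proof -
    define y :: "nat \<Rightarrow> 'k" where "y = bvec (m + t)"
    have y: "y \<in> vecs rr" unfolding y_def using t by (simp add: rr_def)
    have low: "MM x y l = 0" if "l < m" for l using that by (simp add: y_def MM_bvec_low)
    have "counit rr ee (MM x y) = (\<Sum>t'<N. MM x y (m + t') / lam t')"
      using low m by (simp add: counit_formula)
    also have "\<dots> = MM x y (m + t) / lam t"
      by (rule sum_single) (use t in \<open>auto simp: MM_high rr_def y_def bvec_def\<close>)
    also have "\<dots> = x (m + t) / lam t" using t by (simp add: MM_high rr_def y_def bvec_def)
    finally show ?thesis using nd[OF y] lam[OF t] by simp
  qed
  have nil: "x a = 0" if a: "a < m" for a
  proof (rule ccontr)
    assume "x a \<noteq> 0"
    define a0 where "a0 = (LEAST a. a < m \<and> x a \<noteq> 0)"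
    have a0: "a0 < m \<and> x a0 \<noteq> 0" unfolding a0_def by (rule LeastI[of _ a]) (use a \<open>x a \<noteq> 0\<close> in simp)
    have mn: "\<And>b. b < a0 \<Longrightarrow> x b = 0"
      using a0 not_less_Least[of _ "\<lambda>a. a < m \<and> x a \<noteq> 0", folded a0_def] by fastforce
    have m2: "m \<ge> 2" using m a0 by auto
    define k where "k = m - 1 - a0"
    define y :: "nat \<Rightarrow> 'k" where "y = bvec k"
    have y: "y \<in> vecs rr" unfolding y_def k_def using m2 by (simp add: rr_def)
    have y0: "MM x y 0 = 0"
    proof -
      have "MM x y 0 = (if k \<le> 0 then x (0 - k) else 0)" using m2 by (simp add: y_def MM_bvec_low)
      also have "\<dots> = 0" using mn[of 0] a0 m2 by (auto simp: k_def)
      finally show ?thesis .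
    qed
    have ym: "MM x y (m - 1) = x a0" using m2 a0 by (simp add: y_def MM_bvec_low k_def)
    have yh: "MM x y (m + t) = 0" if "t < N" for t
      using that a0 m2 by (simp add: MM_high rr_def y_def bvec_def k_def)
    have "counit rr ee (MM x y) = x a0"
      using m2 y0 ym yh by (simp add: counit_formula)
    thus False using nd[OF y] a0 by simp
  qed
  show ?thesis
  proof
    fix l
    show "x l = 0"
    proof (cases "l < m")
      case True thus ?thesis by (rule nil)
    next
      case False
      show ?thesis
      proof (cases "l < rr")
        case True
        hence "l = m + (l - m)" "l - m < N" using False by (auto simp: rr_def)
        thus ?thesis using fld[of "l - m"] by metis
      next
        case False thus ?thesis using x by (simp add: vecs_def)
      qed
    qed
  qed
qed

lemma CF_cons: "comm_frobenius rr cc uu ee"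
  unfolding comm_frobenius_def amult_MM
  using MM_comm MM_assoc uu_vecs MM_unit nondeg_cons by blast

definition hc :: "nat \<Rightarrow> 'k" where
  "hc l = (if l < m then (if l = m - 1 then of_nat m else 0) else if l < rr then lam (l - m) else 0)"

lemma hc_vecs: "hc \<in> vecs rr" by (simp add: hc_def vecs_def rr_def)

lemma MM_hc_low: "l < m \<Longrightarrow> MM hc z l = (if l = m - 1 then of_nat m * z 0 else 0)"
proof -
  assume l: "l < m"
  have "MM hc z l = (\<Sum>i=0..l. hc i * z (l - i))" using l by (simp add: MM_def fps_mult_nth)
  also have "\<dots> = (if l = m - 1 then of_nat m * z 0 else 0)"
  proof (cases "l = m - 1")
    case True
    have "(\<Sum>i=0..l. hc i * z (l - i)) = hc l * z (l - l)"
      by (rule sum_upto_single) (use True l in \<open>auto simp: hc_def\<close>)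
    thus ?thesis using True l by (simp add: hc_def)
  next
    case False thus ?thesis using l by (auto simp: hc_def intro!: sum.neutral)
  qed
  finally show ?thesis .
qed

lemma mtr_Lm_cons: "mtr (Lm rr cc y) = of_nat m * y 0 + (\<Sum>t<N. y (m + t))"
proof -
  have "mtr (Lm rr cc y) = (\<Sum>i<rr. MM y (bvec i) i)"
    by (simp add: mtr_def Lm_entry amult_MM)
  also have "\<dots> = (\<Sum>i<m. MM y (bvec i) i) + (\<Sum>t<N. MM y (bvec (m + t)) (m + t))"
    by (rule sum_split_rr)
  also have "(\<Sum>i<m. MM y (bvec i) i) = (\<Sum>i<m. y 0)" by (rule sum.cong) (auto simp: MM_bvec_low)
  also have "(\<Sum>t<N. MM y (bvec (m + t)) (m + t)) = (\<Sum>t<N. y (m + t))"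
    by (rule sum.cong) (auto simp: MM_high rr_def bvec_def)
  finally show ?thesis by simp
qed

lemma counit_hc: "counit rr ee (amult rr cc hc y) = mtr (Lm rr cc y)"
proof -
  have a: "(if m = 0 then 0 else mu * MM hc y 0 + MM hc y (m - 1)) = of_nat m * y 0"
  proof (cases "m = 0")
    case False
    hence "m \<ge> 2" using m by simp
    thus ?thesis by (simp add: MM_hc_low)
  qed simp
  have b: "(\<Sum>t<N. MM hc y (m + t) / lam t) = (\<Sum>t<N. y (m + t))"
    by (rule sum.cong) (auto simp: MM_high rr_def hc_def lam)
  show ?thesis unfolding amult_MM counit_formula a b mtr_Lm_cons ..
qed

lemma counit_diff: "counit r e (\<lambda>l. f l - a * g l) = counit r e f - a * counit r e g"
  by (simp add: counit_def algebra_simps sum_subtractf sum_distrib_left)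

lemma handle_cons: "handle rr cc ee = hc"
proof -
  define D where "D = (\<lambda>l. handle rr cc ee l - 1 * hc l)"
  have D: "D \<in> vecs rr" unfolding D_def using handle_vecs[OF CF_cons] hc_vecs by (simp add: vecs_def)
  have "D = (\<lambda>_. 0)"
  proof (rule nondeg[OF CF_cons D])
    fix y :: "nat \<Rightarrow> 'k" assume y: "y \<in> vecs rr"
    have "counit rr ee (amult rr cc D y) =
        counit rr ee (amult rr cc (handle rr cc ee) y) - 1 * counit rr ee (amult rr cc hc y)"
      unfolding D_def amult_lin1' counit_diff ..
    also have "\<dots> = 0" using handle_tr[OF CF_cons y] counit_hc by simp
    finally show "counit rr ee (amult rr cc D y) = 0" .
  qed
  hence z: "\<And>l. D l = 0" by simp
  show ?thesis
  proof (rule ext)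
    fix l from z[of l] show "handle rr cc ee l = hc l" unfolding D_def by simp
  qed
qed

definition PP :: "nat \<Rightarrow> nat \<Rightarrow> 'k" where
  "PP g l = (if l < m then (if g = 0 then uu l else if g = 1 then hc l else 0)
     else if l < rr then lam (l - m) ^ g else 0)"

lemma pw_cons0: "(MM hc ^^ g) uu = PP g"
proof (induct g)
  case 0
  show ?case by (rule ext) (simp add: PP_def uu_def)
next
  case (Suc g)
  have "(MM hc ^^ Suc g) uu = MM hc (PP g)"
    using Suc by simp
  also have "\<dots> = PP (Suc g)"
  proof
    fix l
    show "MM hc (PP g) l = PP (Suc g) l"
    proof (cases "l < m")
      case True
      hence m2: "m \<ge> 2" using m by auto
      have "PP g 0 = (if g = 0 then 1 else 0)" using m2 by (simp add: PP_def uu_def hc_def)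
      thus ?thesis using True m2 by (simp add: MM_hc_low PP_def hc_def uu_def)
    next
      case False
      thus ?thesis by (simp add: MM_def PP_def hc_def)
    qed
  qed
  finally show ?case .
qed

lemma pw_cons: "(amult rr cc (handle rr cc ee) ^^ g) uu = PP g"
proof -
  have "amult rr cc (handle rr cc ee) = MM hc" by (rule ext) (simp add: amult_MM handle_cons)
  thus ?thesis using pw_cons0 by simp
qed

lemma genfun_cons:
  "fps_nth (genfun rr cc uu ee) g =
    (if g = 0 then mu + (\<Sum>t<N. 1 / lam t) else (if g = 1 then of_nat m else 0) + (\<Sum>t<N. lam t ^ (g - 1)))"
proof -
  have "fps_nth (genfun rr cc uu ee) g = counit rr ee (PP g)"
    by (simp add: genfun_def pw_cons)
  also have "\<dots> = (if g = 0 then mu + (\<Sum>t<N. 1 / lam t) else (if g = 1 then of_nat m else 0) + (\<Sum>t<N. lam t ^ (g - 1)))"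
  proof -
    have A: "(if m = 0 then 0 else mu * PP g 0 + PP g (m - 1)) =
       (if g = 0 then mu else if g = 1 then of_nat m else 0)"
    proof (cases "m = 0")
      case True thus ?thesis using mu by simp
    next
      case False
      hence "m \<ge> 2" using m by simp
      thus ?thesis by (simp add: PP_def uu_def hc_def)
    qed
    have B: "(\<Sum>t<N. PP g (m + t) / lam t) = (\<Sum>t<N. lam t ^ g / lam t)"
      by (rule sum.cong) (auto simp: PP_def rr_def)
    have C: "(\<Sum>t<N. lam t ^ g / lam t) = (\<Sum>t<N. lam t ^ (g - 1))" if "g > 0"
      using that by (intro sum.cong) (auto simp: lam power_eq_if)
    show ?thesis unfolding counit_formula A B using C by (cases "g = 0") auto
  qed
  finally show ?thesis .
qed

end

lemma sum_split_nat: fixes a b :: nat shows "(\<Sum>i<a+b. f i) = (\<Sum>i<a. f i) + (\<Sum>j<b. f (a + j))"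
  by (induct b) (simp_all add: add.assoc)

lemma expand:
  fixes lams :: "nat \<Rightarrow> 'k::field" and ms :: "nat \<Rightarrow> nat" and s :: nat
  shows "(\<forall>i<s. lams i \<noteq> 0) \<Longrightarrow> \<exists>(N::nat) lam. (\<forall>t<N. lam t \<noteq> 0) \<and>
     (\<forall>f::'k \<Rightarrow> 'k. (\<Sum>t<N. f (lam t)) = (\<Sum>i<s. of_nat (ms i) * f (lams i)))"
proof (induct s)
  case 0 show ?case by (intro exI[of _ "0::nat"] exI[of _ "\<lambda>_::nat. 1::'k"]) simp
next
  case (Suc s)
  then obtain N :: nat and lam :: "nat \<Rightarrow> 'k" where l: "\<forall>t<N. lam t \<noteq> 0"
    and sm: "\<forall>f::'k \<Rightarrow> 'k. (\<Sum>t<N. f (lam t)) = (\<Sum>i<s. of_nat (ms i) * f (lams i))" by auto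
  define lam' where "lam' = (\<lambda>t. if t < N then lam t else lams s)"
  have "\<forall>t<N + ms s. lam' t \<noteq> 0" using l Suc(2) by (auto simp: lam'_def)
  moreover have "\<forall>f::'k \<Rightarrow> 'k. (\<Sum>t<N + ms s. f (lam' t)) = (\<Sum>i<Suc s. of_nat (ms i) * f (lams i))"
  proof
    fix f :: "'k \<Rightarrow> 'k"
    have "(\<Sum>t<N + ms s. f (lam' t)) = (\<Sum>t<N. f (lam' t)) + (\<Sum>j<ms s. f (lam' (N + j)))"
      by (rule sum_split_nat)
    also have "(\<Sum>t<N. f (lam' t)) = (\<Sum>t<N. f (lam t))" by (simp add: lam'_def)
    also have "(\<Sum>j<ms s. f (lam' (N + j))) = of_nat (ms s) * f (lams s)" by (simp add: lam'_def)
    finally show "(\<Sum>t<N + ms s. f (lam' t)) = (\<Sum>i<Suc s. of_nat (ms i) * f (lams i))"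
      using sm by simp
  qed
  ultimately show ?case by blast
qed

lemma realize:
  fixes mu :: "'k::field" and lams :: "nat \<Rightarrow> 'k"
  assumes m: "m = 0 \<or> m \<ge> 2" and mu: "m = 0 \<Longrightarrow> mu = 0" and l: "\<forall>i<s. lams i \<noteq> 0"
  shows "\<exists>r c u e. comm_frobenius r c u e \<and>
     genfun r c u e = fps_const mu + fps_const (of_nat m) * fps_X + geom_part s ms lams"
proof -
  from expand[OF l, of ms] obtain N :: nat and lam :: "nat \<Rightarrow> 'k" where ln: "\<forall>t<N. lam t \<noteq> 0"
    and sm: "\<forall>f::'k \<Rightarrow> 'k. (\<Sum>t<N. f (lam t)) = (\<Sum>i<s. of_nat (ms i) * f (lams i))" by blast
  interpret cons m N mu lam using m mu ln by unfold_locales auto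
  have "genfun rr cc uu ee = fps_const mu + fps_const (of_nat m) * fps_X + geom_part s ms lams"
  proof (rule fps_ext)
    fix g
    show "fps_nth (genfun rr cc uu ee) g = fps_nth (fps_const mu + fps_const (of_nat m) * fps_X + geom_part s ms lams) g"
    proof (cases g)
      case 0
      have "(\<Sum>t<N. 1 / lam t) = (\<Sum>i<s. of_nat (ms i) / lams i)"
        using sm[rule_format, of "\<lambda>x. 1 / x"] by simp
      thus ?thesis using 0 by (simp add: genfun_cons geom_nth)
    next
      case (Suc h)
      have "(\<Sum>t<N. lam t ^ h) = (\<Sum>i<s. of_nat (ms i) * lams i ^ h)"
        using sm[rule_format, of "\<lambda>x. x ^ h"] by simp
      also have "\<dots> = (\<Sum>i<s. of_nat (ms i) / lams i * lams i ^ Suc h)"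
        using l by (intro sum.cong) auto
      finally show ?thesis using Suc by (simp add: genfun_cons geom_nth fps_X_nth)
    qed
  qed
  thus ?thesis using CF_cons by blast
qed

theorem dir2:
  fixes F :: "'k::field fps"
  assumes "form1 F \<or> form2 F"
  shows "\<exists>r c u e. comm_frobenius r c u e \<and> genfun r c u e = F"
  using assms
proof
  assume "form1 F"
  then obtain mu m s ms lams where m: "(m::nat) \<ge> 2" and l: "\<forall>i<s. ms i \<ge> 1 \<and> lams i \<noteq> 0"
    and F: "F = fps_const mu + fps_const (of_nat m) * fps_X + geom_part s ms lams"
    unfolding form1_def by blast
  show ?thesis using realize[of m mu s lams ms] m l F by auto
next
  assume "form2 F"
  then obtain s ms lams where l: "\<forall>i<s. ms i \<ge> 1 \<and> lams i \<noteq> 0"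
    and F: "F = geom_part s ms lams"
    unfolding form2_def by blast
  show ?thesis using realize[of 0 "0::'k" s lams ms] l F by auto
qed

theorem mainTheorem10:
  fixes k_type :: "'k::alg_closed_field itself"
  shows "(\<forall>r (c :: nat \<Rightarrow> nat \<Rightarrow> nat \<Rightarrow> 'k) u e. comm_frobenius r c u e \<longrightarrow>
            form1 (genfun r c u e) \<or> form2 (genfun r c u e)) \<and>
         (\<forall>F :: 'k fps. form1 F \<or> form2 F \<longrightarrow>
            (\<exists>r c u e. comm_frobenius r c u e \<and> genfun r c u e = F))"
  using dir1 dir2 by blast

end
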